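(* Let $L\ge 2$, let $\lambda_1>\cdots>\lambda_L\ge 0$ be known reals and $r_1,\ldots,r_L$ known positive integers. For $\sigma_\alpha^2\ge0$, $\sigma_\varepsilon^2>0$, let $S_\ell=(\lambda_\ell\sigma_\alpha^2+\sigma_\varepsilon^2)V_\ell$ with $V_1,\ldots,V_L$ independent, $V_\ell\sim\chi^2_{r_\ell}$, let $\rho=\sigma_\alpha^2/(\sigma_\alpha^2+\sigma_\varepsilon^2)$, and let $X=(X_1,\ldots,X_{L-1})$ with $X_\ell=(S_\ell/r_\ell)/(S_L/r_L)$, with sampling distribution $\mathsf{P}_{X\mid\rho,\sigma_\varepsilon^2}$. For $\alpha\in(0,1)$ define the plausibility interval $\Pi_\alpha(x)=\{r\in[0,1):\mathsf{pl}_{x\mid H_r(x),r}(r)>\alpha\}$, with $H_r$ and the plausibility function as defined in the context. Then for every $\rho\in[0,1)$ and every $\sigma_\varepsilon^2>0$, $\mathsf{P}_{X\mid\rho,\sigma_\varepsilon^2}\{\Pi_\alpha(X)\ni\rho\}=1-\alpha$.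
   Context: Definitions: $f_\ell(\rho)=\dfrac{1+\rho(\lambda_\ell-1)}{1+\rho(\lambda_L-1)}$, $\ell=1,\ldots,L-1$; $U_\ell=(V_\ell/r_\ell)/(V_L/r_L)$, so $X_\ell=f_\ell(\rho)U_\ell$. Let $g(\rho)=\bigl(\tfrac{d}{d\rho}\log f_\ell(\rho)\bigr)_{\ell=1}^{L-1}$ and $M_\rho$ an $(L-2)\times(L-1)$ matrix whose rows form a basis of the orthogonal complement of $g(\rho)$ (vacuous if $L=2$). For $u,x\in(0,\infty)^{L-1}$: $\eta_\rho(u)=M_\rho(\log u_\ell)_{\ell}^\top$, $\tau(u)=\sum_\ell\log u_\ell$, $H_\rho(x)=M_\rho\bigl(\log(x_\ell/f_\ell(\rho))\bigr)_\ell^\top$, $T(x)=\sum_\ell\log x_\ell$, $\phi(\rho)=\sum_\ell\log f_\ell(\rho)$. For a value $h$, $\mathsf{P}_{V\mid h,\rho}$ is the conditional distribution of $V=\tau(U)$ given $\eta_\rho(U)=h$, $\mu_{h,\rho}$ its mean, and $F_{h,\rho}$ the distribution function of $|V-\mu_{h,\rho}|$ under $\mathsf{P}_{V\mid h,\rho}$. The plausibility function is $\mathsf{pl}_{x\mid h,\rho}(\rho)=1-F_{h,\rho}(|T(x)-\phi(\rho)-\mu_{h,\rho}|)$. *)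

theory Defs
  imports "HOL-Probability.Probability"
begin

(* Indices: ell ranges over {1..L}; vectors in R^(L-1) are functions nat => real
   used on {1..L-1}; vectors in R^(L-2) (values h of eta) are extensional functions
   on {..<L-2}, measured with PiM. *)

definition chi2_density :: "nat \<Rightarrow> real \<Rightarrow> real" where
  "chi2_density k x = (if x > 0 then x powr (real k / 2 - 1) * exp (- x / 2)
                        / (2 powr (real k / 2) * Gamma (real k / 2)) else 0)"

definition fl :: "(nat \<Rightarrow> real) \<Rightarrow> nat \<Rightarrow> nat \<Rightarrow> real \<Rightarrow> real" where
  "fl lam L l r = (1 + r * (lam l - 1)) / (1 + r * (lam L - 1))"

definition gvec :: "(nat \<Rightarrow> real) \<Rightarrow> nat \<Rightarrow> real \<Rightarrow> nat \<Rightarrow> real" where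
  "gvec lam L r l = deriv (\<lambda>t. ln (fl lam L l t)) r"

definition compl_basis :: "nat \<Rightarrow> (nat \<Rightarrow> real) \<Rightarrow> (nat \<Rightarrow> nat \<Rightarrow> real) \<Rightarrow> bool" where
  "compl_basis L g Mm \<longleftrightarrow>
     (\<forall>i<L-2. (\<Sum>l=1..L-1. Mm i l * g l) = 0) \<and>
     (\<forall>c. (\<forall>l\<in>{1..L-1}. (\<Sum>i<L-2. c i * Mm i l) = 0) \<longrightarrow> (\<forall>i<L-2. c i = 0)) \<and>
     (\<forall>v. (\<Sum>l=1..L-1. v l * g l) = 0 \<longrightarrow>
          (\<exists>c. \<forall>l\<in>{1..L-1}. v l = (\<Sum>i<L-2. c i * Mm i l)))"

definition eta :: "nat \<Rightarrow> (nat \<Rightarrow> nat \<Rightarrow> real) \<Rightarrow> (nat \<Rightarrow> real) \<Rightarrow> (nat \<Rightarrow> real)" where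
  "eta L Mm u = restrict (\<lambda>i. \<Sum>l=1..L-1. Mm i l * ln (u l)) {..<L-2}"

definition tau :: "nat \<Rightarrow> (nat \<Rightarrow> real) \<Rightarrow> real" where
  "tau L u = (\<Sum>l=1..L-1. ln (u l))"

definition Hfun :: "(nat \<Rightarrow> real) \<Rightarrow> nat \<Rightarrow> (nat \<Rightarrow> nat \<Rightarrow> real) \<Rightarrow> real \<Rightarrow> (nat \<Rightarrow> real) \<Rightarrow> (nat \<Rightarrow> real)" where
  "Hfun lam L Mm r x = restrict (\<lambda>i. \<Sum>l=1..L-1. Mm i l * ln (x l / fl lam L l r)) {..<L-2}"

definition Tfun :: "nat \<Rightarrow> (nat \<Rightarrow> real) \<Rightarrow> real" where
  "Tfun L x = (\<Sum>l=1..L-1. ln (x l))"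

definition phi :: "(nat \<Rightarrow> real) \<Rightarrow> nat \<Rightarrow> real \<Rightarrow> real" where
  "phi lam L r = (\<Sum>l=1..L-1. ln (fl lam L l r))"

definition hspace :: "nat \<Rightarrow> (nat \<Rightarrow> real) measure" where
  "hspace L = PiM {..<L-2} (\<lambda>_. borel)"

definition cond_mean :: "real measure \<Rightarrow> real" where
  "cond_mean P = (\<integral>v. v \<partial>P)"

definition dev_cdf :: "real measure \<Rightarrow> real \<Rightarrow> real" where
  "dev_cdf P t = measure P {v. \<bar>v - cond_mean P\<bar> \<le> t}"

text \<open>K r h is the conditional distribution P_{V|h,r}; pl x h r = pl_{x|h,r}(r).\<close>
definition plaus :: "(nat \<Rightarrow> real) \<Rightarrow> nat \<Rightarrow> (real \<Rightarrow> (nat \<Rightarrow> real) \<Rightarrow> real measure)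
      \<Rightarrow> (nat \<Rightarrow> real) \<Rightarrow> (nat \<Rightarrow> real) \<Rightarrow> real \<Rightarrow> real" where
  "plaus lam L K x h r =
     1 - dev_cdf (K r h) \<bar>Tfun L x - phi lam L r - cond_mean (K r h)\<bar>"

definition plaus_interval :: "(nat \<Rightarrow> real) \<Rightarrow> nat \<Rightarrow> (real \<Rightarrow> nat \<Rightarrow> nat \<Rightarrow> real)
      \<Rightarrow> (real \<Rightarrow> (nat \<Rightarrow> real) \<Rightarrow> real measure) \<Rightarrow> real \<Rightarrow> (nat \<Rightarrow> real) \<Rightarrow> real set" where
  "plaus_interval lam L Mm K \<alpha> x =
     {r \<in> {0..<1}. plaus lam L K x (Hfun lam L (Mm r) r x) r > \<alpha>}"

definition is_cond_dist :: "'a measure \<Rightarrow> nat \<Rightarrow> ('a \<Rightarrow> nat \<Rightarrow> real)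
      \<Rightarrow> (nat \<Rightarrow> nat \<Rightarrow> real) \<Rightarrow> ((nat \<Rightarrow> real) \<Rightarrow> real measure) \<Rightarrow> bool" where
  "is_cond_dist M L U Mm Kr \<longleftrightarrow>
     Kr \<in> hspace L \<rightarrow>\<^sub>M prob_algebra borel \<and>
     (\<forall>A\<in>sets (hspace L). \<forall>B\<in>sets borel.
        emeasure M {\<omega>\<in>space M. eta L Mm (U \<omega>) \<in> A \<and> tau L (U \<omega>) \<in> B}
        = (\<integral>\<^sup>+\<omega>. indicator A (eta L Mm (U \<omega>)) * emeasure (Kr (eta L Mm (U \<omega>))) B \<partial>M))"

end

theory Submission
  imports Defs
begin

lemma (in real_distribution) cdf_uniform:
  assumes atom: "\<And>y. measure M {y} = 0" and b: "0 < \<beta>" "\<beta> < 1"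
  shows "measure M {y. cdf M y < \<beta>} = \<beta>"
proof -
  have cont: "isCont (cdf M) y" for y using atom isCont_cdf by blast
  define T where "T = {y. \<beta> \<le> cdf M y}"
  have "eventually (\<lambda>y. cdf M y > \<beta>) at_top"
    using order_tendstoD(1)[OF cdf_lim_at_top_prob b(2)] .
  then obtain y0 where y0: "\<And>y. y \<ge> y0 \<Longrightarrow> cdf M y > \<beta>" by (auto simp: eventually_at_top_linorder)
  have "eventually (\<lambda>y. cdf M y < \<beta>) at_bot"
    using order_tendstoD(2)[OF cdf_lim_at_bot b(1)] .
  then obtain y1 where y1: "\<And>y. y \<le> y1 \<Longrightarrow> cdf M y < \<beta>" by (auto simp: eventually_at_bot_linorder)
  have Tne: "T \<noteq> {}" using y0[of y0] by (auto simp: T_def intro!: exI[of _ y0])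
  have Tbdd: "bdd_below T"
    unfolding bdd_below_def T_def
  proof (rule exI[of _ y1], intro ballI)
    fix x assume "x \<in> {y. \<beta> \<le> cdf M y}"
    then show "y1 \<le> x" using y1[of x] by force
  qed
  define s where "s = Inf T"
  have Tclosed: "closed T"
    unfolding T_def using cont by (intro closed_Collect_le continuous_intros) (auto simp: continuous_on_eq_continuous_at)
  have sT: "s \<in> T" unfolding s_def by (rule closed_contains_Inf[OF Tne Tbdd Tclosed])
  have S: "{y. cdf M y < \<beta>} = {..<s}"
  proof (intro set_eqI iffI)
    fix y assume "y \<in> {y. cdf M y < \<beta>}"
    then have "cdf M y < \<beta>" by simp
    moreover have "y \<ge> s \<Longrightarrow> cdf M y \<ge> \<beta>" using sT cdf_nondecreasing[of s y] by (auto simp: T_def)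
    ultimately show "y \<in> {..<s}" by force
  next
    fix y assume "y \<in> {..<s}"
    then have "y \<notin> T" using cInf_lower[OF _ Tbdd, of y] by (auto simp: s_def)
    then show "y \<in> {y. cdf M y < \<beta>}" by (auto simp: T_def)
  qed
  have cs: "cdf M s = \<beta>"
  proof (rule ccontr)
    assume "cdf M s \<noteq> \<beta>"
    then have gt: "cdf M s > \<beta>" using sT by (auto simp: T_def)
    have "(cdf M \<longlongrightarrow> cdf M s) (at_left s)"
      using cont[of s] by (simp add: isCont_def filterlim_at_split)
    from order_tendstoD(1)[OF this gt] obtain b where b: "b < s" "\<And>y. b < y \<Longrightarrow> y < s \<Longrightarrow> cdf M y > \<beta>"
      unfolding eventually_at_left_field by blast
    have m1: "b < (b + s) / 2" "(b + s) / 2 < s" using b(1) by simp_all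
    hence "cdf M ((b + s) / 2) > \<beta>" using b(2) by blast
    moreover have "(b + s) / 2 \<in> {y. cdf M y < \<beta>}" using S m1(2) by simp
    ultimately show False by simp
  qed
  have "measure M {..s} = measure M {..<s} + measure M {s}"
    by (subst finite_measure_Union[symmetric]) (auto intro!: arg_cong[where f="measure M"])
  then show ?thesis using S cs atom[of s] by (simp add: cdf_def)
qed

lemma unif_dev:
  fixes Q :: "real measure" and \<mu> \<beta> :: real
  assumes Q: "prob_space Q" "sets Q = sets borel" and atom: "\<And>v. measure Q {v} = 0"
    and b: "0 < \<beta>" "\<beta> < 1"
  shows "measure Q {v. dev_cdf Q \<bar>v - cond_mean Q\<bar> < \<beta>} = \<beta>"
proof -
  interpret prob_space Q by (rule Q(1))
  define m where "m = cond_mean Q"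
  let ?f = "\<lambda>w. \<bar>w - m\<bar>"
  have fm: "?f \<in> borel_measurable Q" using Q(2) by (simp cong: measurable_cong_sets)
  define D where "D = distr Q borel ?f"
  interpret D: real_distribution D unfolding D_def using fm by (rule real_distribution_distr)
  have spQ: "space Q = UNIV" using sets_eq_imp_space_eq[OF Q(2)] by simp
  have cdfD: "cdf D y = dev_cdf Q y" for y
  proof -
    have "cdf D y = measure Q (?f -` {..y} \<inter> space Q)"
      unfolding cdf_def D_def using fm by (subst measure_distr) auto
    then show ?thesis by (simp add: dev_cdf_def m_def spQ vimage_def)
  qed
  have atomD: "measure D {y} = 0" for y
  proof -
    have "measure D {y} = measure Q (?f -` {y} \<inter> space Q)"
      unfolding D_def using fm by (subst measure_distr) auto
    also have "?f -` {y} \<inter> space Q \<subseteq> {m + y, m - y}" by auto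
    then have "measure Q (?f -` {y} \<inter> space Q) \<le> measure Q {m + y, m - y}"
      using Q(2) by (intro finite_measure_mono) auto
    also have "\<dots> \<le> measure Q {m + y} + measure Q {m - y}"
      using Q(2) by (subst insert_is_Un) (intro measure_Un_le; auto)
    finally show ?thesis using atom[of "m+y"] atom[of "m-y"] measure_nonneg[of D "{y}"] by simp
  qed
  have "measure Q {v. dev_cdf Q \<bar>v - cond_mean Q\<bar> < \<beta>} = measure Q (?f -` {y. cdf D y < \<beta>} \<inter> space Q)"
    by (simp add: cdfD spQ m_def vimage_def)
  also have "\<dots> = measure D {y. cdf D y < \<beta>}"
  proof -
    have "{y. cdf D y < \<beta>} \<in> sets borel"
    proof -
      have "cdf D \<in> borel_measurable borel"
        by (intro borel_measurable_mono) (simp add: D.cdf_nondecreasing mono_def)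
      then show ?thesis by measurable
    qed
    then show ?thesis unfolding D_def using fm by (subst measure_distr) auto
  qed
  also have "\<dots> = \<beta>" by (rule D.cdf_uniform[OF atomD b])
  finally show ?thesis .
qed

lemma disint_ext:
  fixes M :: "'a measure" and H :: "'h measure" and W :: "'a \<Rightarrow> 'h" and T :: "'a \<Rightarrow> real"
  assumes P: "prob_space M"
    and Wm: "W \<in> M \<rightarrow>\<^sub>M H" and Tm: "T \<in> borel_measurable M"
    and K: "K \<in> H \<rightarrow>\<^sub>M prob_algebra borel"
    and rect: "\<forall>A\<in>sets H. \<forall>B\<in>sets borel. emeasure M {\<omega>\<in>space M. W \<omega> \<in> A \<and> T \<omega> \<in> B}
          = (\<integral>\<^sup>+\<omega>. indicator A (W \<omega>) * emeasure (K (W \<omega>)) B \<partial>M)"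
    and G: "G \<in> sets (H \<Otimes>\<^sub>M borel)"
  shows "emeasure M {\<omega>\<in>space M. (W \<omega>, T \<omega>) \<in> G} = (\<integral>\<^sup>+\<omega>. emeasure (K (W \<omega>)) (Pair (W \<omega>) -` G) \<partial>M)"
proof -
  interpret prob_space M by (rule P)
  have Ks: "K \<in> H \<rightarrow>\<^sub>M subprob_algebra borel" by (rule measurable_prob_algebraD[OF K])
  have sK: "h \<in> space H \<Longrightarrow> sets (K h) = sets borel" for h
    using Ks by (rule subprob_measurableD(2))
  have pK: "h \<in> space H \<Longrightarrow> prob_space (K h)" for h
    using measurable_space[OF K] by (simp add: space_prob_algebra)
  have WTm: "(\<lambda>\<omega>. (W \<omega>, T \<omega>)) \<in> M \<rightarrow>\<^sub>M H \<Otimes>\<^sub>M borel"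
    using Wm Tm by (intro measurable_Pair) auto
  define N1 where "N1 = distr M (H \<Otimes>\<^sub>M borel) (\<lambda>\<omega>. (W \<omega>, T \<omega>))"
  define F where "F h = distr (K h) (H \<Otimes>\<^sub>M borel) (Pair h)" for h
  have Fm: "F \<in> H \<rightarrow>\<^sub>M subprob_algebra (H \<Otimes>\<^sub>M borel)"
    unfolding F_def by (rule measurable_distr2[OF _ Ks]) simp
  define N2 where "N2 = distr M H W \<bind> F"
  have spH: "space (distr M H W) \<noteq> {}"
    using measurable_space[OF Wm] not_empty by auto
  have e2: "emeasure N2 X = (\<integral>\<^sup>+\<omega>. emeasure (K (W \<omega>)) (Pair (W \<omega>) -` X) \<partial>M)"
    if X: "X \<in> sets (H \<Otimes>\<^sub>M borel)" for X
  proof -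
    have "emeasure N2 X = (\<integral>\<^sup>+h. emeasure (F h) X \<partial>distr M H W)"
      unfolding N2_def using spH Fm X by (subst emeasure_bind) auto
    also have "\<dots> = (\<integral>\<^sup>+\<omega>. emeasure (F (W \<omega>)) X \<partial>M)"
      using Fm X Wm by (subst nn_integral_distr) auto
    also have "\<dots> = (\<integral>\<^sup>+\<omega>. emeasure (K (W \<omega>)) (Pair (W \<omega>) -` X) \<partial>M)"
    proof (rule nn_integral_cong)
      fix \<omega> assume \<omega>: "\<omega> \<in> space M"
      then have h: "W \<omega> \<in> space H" using measurable_space[OF Wm] by auto
      have "(Pair (W \<omega>)) \<in> K (W \<omega>) \<rightarrow>\<^sub>M H \<Otimes>\<^sub>M borel"
        using h sK[OF h] by (simp cong: measurable_cong_sets)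
      then have "emeasure (F (W \<omega>)) X = emeasure (K (W \<omega>)) (Pair (W \<omega>) -` X \<inter> space (K (W \<omega>)))"
        unfolding F_def using X by (subst emeasure_distr) auto
      also have "space (K (W \<omega>)) = UNIV" using sets_eq_imp_space_eq[OF sK[OF h]] by simp
      finally show "emeasure (F (W \<omega>)) X = emeasure (K (W \<omega>)) (Pair (W \<omega>) -` X)" by simp
    qed
    finally show ?thesis .
  qed
  have "N1 = N2"
  proof (rule measure_eqI_generator_eq[OF Int_stable_pair_measure_generator pair_measure_closed])
    show "sets N1 = sigma_sets (space H \<times> space (borel :: real measure)) {a \<times> b |a b. a \<in> sets H \<and> b \<in> sets (borel :: real measure)}"
      unfolding N1_def by (simp add: sets_pair_measure)
    show "sets N2 = sigma_sets (space H \<times> space (borel :: real measure)) {a \<times> b |a b. a \<in> sets H \<and> b \<in> sets (borel :: real measure)}"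
      unfolding N2_def using spH Fm by (subst sets_bind[OF subprob_measurableD(2)[OF Fm]]) (auto simp: sets_pair_measure)
    fix X assume "X \<in> {a \<times> b |a b. a \<in> sets H \<and> b \<in> sets (borel :: real measure)}"
    then obtain a b where X: "X = a \<times> b" "a \<in> sets H" "b \<in> sets (borel :: real measure)" by auto
    have Xs: "X \<in> sets (H \<Otimes>\<^sub>M borel)" using X by auto
    have "emeasure N1 X = emeasure M {\<omega>\<in>space M. W \<omega> \<in> a \<and> T \<omega> \<in> b}"
      unfolding N1_def using Xs WTm X by (subst emeasure_distr) (auto intro!: arg_cong[where f="emeasure M"])
    also have "\<dots> = (\<integral>\<^sup>+\<omega>. indicator a (W \<omega>) * emeasure (K (W \<omega>)) b \<partial>M)"
      using rect X by auto
    also have "\<dots> = (\<integral>\<^sup>+\<omega>. emeasure (K (W \<omega>)) (Pair (W \<omega>) -` X) \<partial>M)"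
      by (rule nn_integral_cong) (auto simp: X indicator_def)
    also have "\<dots> = emeasure N2 X" using e2[OF Xs] by simp
    finally show "emeasure N1 X = emeasure N2 X" .
  next
    show "range (\<lambda>_. space H \<times> space borel) \<subseteq> {a \<times> b |a b. a \<in> sets H \<and> b \<in> sets (borel :: real measure)}"
      by (intro subsetI, simp only: image_iff) (blast intro: sets.top)
    show "(\<Union>i. space H \<times> space borel) = space H \<times> (space borel :: real set)" by simp
    show "emeasure N1 (space H \<times> space (borel :: real measure)) \<noteq> \<infinity>" for i :: nat
      proof -
      have "prob_space N1" unfolding N1_def by (rule prob_space_distr[OF WTm])
      then show ?thesis using finite_measure.emeasure_finite[OF prob_space.finite_measure] by auto
    qed
  qed
  have "emeasure M {\<omega>\<in>space M. (W \<omega>, T \<omega>) \<in> G} = emeasure N1 G"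
    unfolding N1_def using G WTm by (subst emeasure_distr) (auto intro!: arg_cong[where f="emeasure M"])
  also have "\<dots> = emeasure N2 G" using \<open>N1 = N2\<close> by simp
  finally show ?thesis using e2[OF G] by simp
qed

lemma PiM_lborel_translate:
  fixes J :: "'i set" and c :: "'i \<Rightarrow> real"
  assumes J: "finite J"
  shows "distr (PiM J (\<lambda>_. lborel)) (PiM J (\<lambda>_. lborel)) (\<lambda>w. \<lambda>i\<in>J. w i + c i) = PiM J (\<lambda>_. lborel)"
proof -
  interpret product_sigma_finite "\<lambda>_. lborel :: real measure"
    by (simp add: product_sigma_finite_def lborel.sigma_finite_measure_axioms)
  have m: "(\<lambda>w. \<lambda>i\<in>J. w i + c i) \<in> PiM J (\<lambda>_. lborel) \<rightarrow>\<^sub>M PiM J (\<lambda>_. lborel)"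
    by (intro measurable_restrict) (auto intro!: borel_measurable_add measurable_component_singleton simp: measurable_lborel2)
  show ?thesis
  proof (rule PiM_eqI[OF J])
    show "sets (distr (PiM J (\<lambda>_. lborel)) (PiM J (\<lambda>_. lborel)) (\<lambda>w. \<lambda>i\<in>J. w i + c i)) = sets (PiM J (\<lambda>_. lborel))"
      by simp
    fix A assume A: "\<And>i. i \<in> J \<Longrightarrow> A i \<in> sets (lborel :: real measure)"
    have "(\<lambda>w. \<lambda>i\<in>J. w i + c i) -` Pi\<^sub>E J A \<inter> space (PiM J (\<lambda>_. lborel)) = Pi\<^sub>E J (\<lambda>i. (\<lambda>x. x + c i) -` A i)"
      by (auto simp: space_PiM PiE_def Pi_def extensional_def)
    then have "emeasure (distr (PiM J (\<lambda>_. lborel)) (PiM J (\<lambda>_. lborel)) (\<lambda>w. \<lambda>i\<in>J. w i + c i)) (Pi\<^sub>E J A)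
       = emeasure (PiM J (\<lambda>_. lborel)) (Pi\<^sub>E J (\<lambda>i. (\<lambda>x. x + c i) -` A i))"
      using A m by (subst emeasure_distr) (auto intro!: sets_PiM_I_finite J)
    also have "\<dots> = (\<Prod>i\<in>J. emeasure lborel ((\<lambda>x. x + c i) -` A i))"
      using A J measurable_sets_borel[of "\<lambda>x. x + c _" borel] by (subst emeasure_PiM) auto
    also have "\<dots> = (\<Prod>i\<in>J. emeasure lborel (A i))"
    proof (rule prod.cong[OF refl])
      fix i assume i: "i \<in> J"
      have "emeasure lborel (A i) = emeasure (distr lborel borel ((+) (c i))) (A i)"
        by (simp add: lborel_distr_plus)
      also have "\<dots> = emeasure lborel ((\<lambda>x. x + c i) -` A i)"
        using A[OF i] measurable_sets_borel[of "\<lambda>x. x + c i" borel "A i"] by (subst emeasure_distr) (auto simp: add.commute[of "c i"] intro!: arg_cong[where f="emeasure lborel"])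
      finally show "emeasure lborel ((\<lambda>x. x + c i) -` A i) = emeasure lborel (A i)" by simp
    qed
    finally show "emeasure (distr (PiM J (\<lambda>_. lborel)) (PiM J (\<lambda>_. lborel)) (\<lambda>w. \<lambda>i\<in>J. w i + c i)) (Pi\<^sub>E J A) = (\<Prod>i\<in>J. emeasure lborel (A i))" .
  qed
qed

lemma null_lines:
  fixes I :: "'i set" and d :: "'i \<Rightarrow> real" and G
  assumes I: "finite I" and j: "j \<in> I" and dj: "d j \<noteq> 0"
    and G: "G \<in> sets (PiM I (\<lambda>_. lborel))"
    and cnt: "\<And>z. z \<in> space (PiM I (\<lambda>_. lborel)) \<Longrightarrow> countable {t. (\<lambda>i\<in>I. z i + t * d i) \<in> G}"
  shows "emeasure (PiM I (\<lambda>_. lborel)) G = 0"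
proof -
  interpret product_sigma_finite "\<lambda>_. lborel :: real measure"
    by (simp add: product_sigma_finite_def lborel.sigma_finite_measure_axioms)
  define J where "J = I - {j}"
  have IJ: "I = insert j J" "j \<notin> J" "finite J" using j I by (auto simp: J_def)
  define Q where "Q s w = (\<lambda>i\<in>I. if i = j then s else w i + (s / d j) * d i)" for s w
  define F :: "('i \<Rightarrow> real) \<Rightarrow> ennreal" where "F x = indicator G (Q (x j) x)" for x
  have Qm: "(\<lambda>x. Q (x j) x) \<in> PiM I (\<lambda>_. lborel) \<rightarrow>\<^sub>M PiM I (\<lambda>_. lborel)"
    unfolding Q_def using j
    by (intro measurable_restrict) (auto simp: measurable_lborel2 intro!: borel_measurable_add borel_measurable_times measurable_component_singleton borel_measurable_divide)
  have Fm: "F \<in> borel_measurable (PiM (insert j J) (\<lambda>_. lborel))"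
    unfolding F_def IJ(1)[symmetric] by (rule measurable_compose[OF Qm borel_measurable_indicator[OF G]])
  have "emeasure (PiM I (\<lambda>_. lborel)) G = (\<integral>\<^sup>+ x. indicator G x \<partial>PiM (insert j J) (\<lambda>_. lborel))"
    using G IJ by simp
  also have "\<dots> = (\<integral>\<^sup>+ s. (\<integral>\<^sup>+ w. indicator G (w(j := s)) \<partial>PiM J (\<lambda>_. lborel)) \<partial>lborel)"
    using G IJ by (subst product_nn_integral_insert_rev) auto
  also have "\<dots> = (\<integral>\<^sup>+ s. (\<integral>\<^sup>+ w. F (w(j := s)) \<partial>PiM J (\<lambda>_. lborel)) \<partial>lborel)"
  proof (rule nn_integral_cong)
    fix s :: real
    let ?T = "\<lambda>w. \<lambda>i\<in>J. w i + (s / d j) * d i"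
    have "(\<integral>\<^sup>+ w. indicator G (w(j := s)) \<partial>PiM J (\<lambda>_. lborel))
        = (\<integral>\<^sup>+ w. indicator G (w(j := s)) \<partial>distr (PiM J (\<lambda>_. lborel)) (PiM J (\<lambda>_. lborel)) ?T)"
      using PiM_lborel_translate[OF IJ(3), of "\<lambda>i. (s / d j) * d i"] by simp
    also have "\<dots> = (\<integral>\<^sup>+ w. indicator G ((?T w)(j := s)) \<partial>PiM J (\<lambda>_. lborel))"
    proof (rule nn_integral_distr)
      show "?T \<in> PiM J (\<lambda>_. lborel) \<rightarrow>\<^sub>M PiM J (\<lambda>_. lborel)"
        by (intro measurable_restrict) (auto intro!: borel_measurable_add measurable_component_singleton simp: measurable_lborel2)
      have "(\<lambda>w. w(j := s)) \<in> PiM J (\<lambda>_. lborel) \<rightarrow>\<^sub>M PiM (insert j J) (\<lambda>_. lborel)"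
        using IJ by (intro measurable_PiM_single') (auto simp: space_PiM PiE_def extensional_def)
      then show "(\<lambda>w. indicator G (w(j := s)) :: ennreal) \<in> borel_measurable (distr (PiM J (\<lambda>_. lborel)) (PiM J (\<lambda>_. lborel)) ?T)"
        using G IJ by (simp only: measurable_distr_eq1) (intro measurable_compose[OF _ borel_measurable_indicator[OF G]]; auto)
    qed
    also have "\<dots> = (\<integral>\<^sup>+ w. F (w(j := s)) \<partial>PiM J (\<lambda>_. lborel))"
    proof (rule nn_integral_cong)
      fix w
      have "(?T w)(j := s) = Q ((w(j:=s)) j) (w(j := s))"
        unfolding Q_def using IJ by (auto simp: fun_eq_iff)
      then show "indicator G ((?T w)(j := s)) = F (w(j := s))" by (simp add: F_def)
    qed
    finally show "(\<integral>\<^sup>+ w. indicator G (w(j := s)) \<partial>PiM J (\<lambda>_. lborel)) = (\<integral>\<^sup>+ w. F (w(j := s)) \<partial>PiM J (\<lambda>_. lborel))" .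
  qed
  also have "\<dots> = (\<integral>\<^sup>+ x. F x \<partial>PiM (insert j J) (\<lambda>_. lborel))"
    using Fm IJ by (subst product_nn_integral_insert_rev) auto
  also have "\<dots> = (\<integral>\<^sup>+ w. (\<integral>\<^sup>+ s. F (w(j := s)) \<partial>lborel) \<partial>PiM J (\<lambda>_. lborel))"
    using Fm IJ by (subst product_nn_integral_insert) auto
  also have "\<dots> = (\<integral>\<^sup>+ w. 0 \<partial>PiM J (\<lambda>_. lborel :: real measure))"
  proof (rule nn_integral_cong)
    fix w assume w: "w \<in> space (PiM J (\<lambda>_. lborel :: real measure))"
    define z where "z = w(j := 0)"
    have z: "z \<in> space (PiM I (\<lambda>_. lborel))"
      using w IJ by (auto simp: z_def space_PiM PiE_def extensional_def)
    define S where "S = {t. (\<lambda>i\<in>I. z i + t * d i) \<in> G}"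
    have cS: "countable ((\<lambda>t. t * d j) ` S)" using cnt[OF z] by (simp add: S_def)
    have QS: "Q s (w(j := s)) = (\<lambda>i\<in>I. z i + (s / d j) * d i)" for s
      unfolding Q_def z_def using dj IJ by (auto simp: fun_eq_iff)
    have "{s. Q s (w(j := s)) \<in> G} = (\<lambda>t. t * d j) ` S"
    proof (intro set_eqI iffI)
      fix s assume "s \<in> {s. Q s (w(j := s)) \<in> G}"
      then have "s / d j \<in> S" by (simp add: S_def QS)
      then show "s \<in> (\<lambda>t. t * d j) ` S" using dj by (intro image_eqI[of _ _ "s / d j"]) auto
    next
      fix s assume "s \<in> (\<lambda>t. t * d j) ` S"
      then obtain t where t: "t \<in> S" "s = t * d j" by auto
      then show "s \<in> {s. Q s (w(j := s)) \<in> G}" using dj by (simp add: S_def QS)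
    qed
    then have null: "{s. Q s (w(j := s)) \<in> G} \<in> null_sets lborel"
      using cS by (simp add: countable_imp_null_set_lborel)
    have "(\<integral>\<^sup>+ s. F (w(j := s)) \<partial>lborel) = (\<integral>\<^sup>+ s. indicator {s. Q s (w(j := s)) \<in> G} s \<partial>lborel)"
      by (rule nn_integral_cong) (simp add: F_def indicator_def)
    also have "\<dots> = 0" using null by (subst nn_integral_indicator) (auto simp: null_sets_def)
    finally show "(\<integral>\<^sup>+ s. F (w(j := s)) \<partial>lborel) = 0" .
  qed
  finally show ?thesis by simp
qed

lemma PiM_density_lborel:
  fixes I :: "'i set" and f :: "'i \<Rightarrow> real \<Rightarrow> ennreal"
  assumes I: "finite I" and fm: "\<And>i. f i \<in> borel_measurable borel"
    and sf: "\<And>i. sigma_finite_measure (density lborel (f i))"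
  shows "PiM I (\<lambda>i. density lborel (f i)) = density (PiM I (\<lambda>_. lborel)) (\<lambda>x. \<Prod>i\<in>I. f i (x i))"
proof -
  interpret L: product_sigma_finite "\<lambda>_. lborel :: real measure"
    by (simp add: product_sigma_finite_def lborel.sigma_finite_measure_axioms)
  interpret D: product_sigma_finite "\<lambda>i. density lborel (f i)"
    using sf by (simp add: product_sigma_finite_def)
  show ?thesis
  proof (rule D.PiM_eqI[OF I, symmetric])
    show "sets (density (PiM I (\<lambda>_. lborel)) (\<lambda>x. \<Prod>i\<in>I. f i (x i))) = sets (PiM I (\<lambda>i. density lborel (f i)))"
      by (simp cong: sets_PiM_cong)
    fix A assume A: "\<And>i. i \<in> I \<Longrightarrow> A i \<in> sets (density lborel (f i))"
    have Am: "Pi\<^sub>E I A \<in> sets (PiM I (\<lambda>_. lborel))"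
      using A I by (intro sets_PiM_I_finite) auto
    have pm: "(\<lambda>x. \<Prod>i\<in>I. f i (x i)) \<in> borel_measurable (PiM I (\<lambda>_. lborel))"
      using fm[measurable] by measurable
    have "emeasure (density (PiM I (\<lambda>_. lborel)) (\<lambda>x. \<Prod>i\<in>I. f i (x i))) (Pi\<^sub>E I A)
        = (\<integral>\<^sup>+ x. (\<Prod>i\<in>I. f i (x i)) * indicator (Pi\<^sub>E I A) x \<partial>PiM I (\<lambda>_. lborel))"
      using Am pm by (simp add: emeasure_density)
    also have "\<dots> = (\<integral>\<^sup>+ x. (\<Prod>i\<in>I. f i (x i) * indicator (A i) (x i)) \<partial>PiM I (\<lambda>_. lborel))"
    proof (rule nn_integral_cong)
      fix x assume x: "x \<in> space (PiM I (\<lambda>_. lborel :: real measure))"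
      have ind: "(indicator (Pi\<^sub>E I A) x :: ennreal) = (\<Prod>i\<in>I. indicator (A i) (x i))"
      proof cases
        assume xA: "x \<in> Pi I A"
        then have "(\<Prod>i\<in>I. indicator (A i) (x i) :: ennreal) = (\<Prod>i\<in>I. 1)"
          by (intro prod.cong refl) (auto simp: indicator_def)
        then show ?thesis using x xA by (simp add: indicator_def space_PiM PiE_def)
      next
        assume "x \<notin> Pi I A"
        then obtain i where i: "i \<in> I" "x i \<notin> A i" by auto
        then have "(\<Prod>i\<in>I. indicator (A i) (x i) :: ennreal) = 0"
          using I by (intro prod_zero bexI[of _ i]) auto
        then show ?thesis using \<open>x \<notin> Pi I A\<close> by (simp add: indicator_def PiE_def)
      qed
      show "(\<Prod>i\<in>I. f i (x i)) * indicator (Pi\<^sub>E I A) x = (\<Prod>i\<in>I. f i (x i) * indicator (A i) (x i))"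
        by (simp add: ind prod.distrib)
    qed
    also have "\<dots> = (\<Prod>i\<in>I. \<integral>\<^sup>+ x. f i x * indicator (A i) x \<partial>lborel)"
      using A fm I by (subst L.product_nn_integral_prod) (auto intro!: borel_measurable_times borel_measurable_indicator simp: measurable_lborel1)
    also have "\<dots> = (\<Prod>i\<in>I. emeasure (density lborel (f i)) (A i))"
      using A fm by (intro prod.cong refl) (simp add: emeasure_density)
    finally show "emeasure (density (PiM I (\<lambda>_. lborel)) (\<lambda>x. \<Prod>i\<in>I. f i (x i))) (Pi\<^sub>E I A) = (\<Prod>i\<in>I. emeasure (density lborel (f i)) (A i))" .
  qed
qed

lemma PiM_density_null:
  fixes I :: "'i set" and f :: "'i \<Rightarrow> real \<Rightarrow> ennreal"
  assumes I: "finite I" and fm: "\<And>i. f i \<in> borel_measurable borel"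
    and sf: "\<And>i. sigma_finite_measure (density lborel (f i))"
    and G: "G \<in> null_sets (PiM I (\<lambda>_. lborel))"
  shows "emeasure (PiM I (\<lambda>i. density lborel (f i))) G = 0"
proof -
  have pm: "(\<lambda>x. \<Prod>i\<in>I. f i (x i)) \<in> borel_measurable (PiM I (\<lambda>_. lborel))"
    using fm[measurable] by measurable
  have "G \<in> null_sets (density (PiM I (\<lambda>_. lborel)) (\<lambda>x. \<Prod>i\<in>I. f i (x i)))"
    using G pm AE_not_in[OF G] by (subst null_sets_density_iff) (auto elim!: AE_mp)
  then show ?thesis
    unfolding PiM_density_lborel[OF I fm sf] by auto
qed

lemma exp_image_null:
  assumes N: "N \<in> null_sets (lborel :: real measure)"
  shows "AE x in lborel. x \<notin> exp ` N"
proof -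
  have "negligible N" using N by (simp add: negligible_iff_null_sets null_sets_completionI)
  then have "negligible (exp ` N)"
    by (intro negligible_differentiable_image_negligible) (auto simp: differentiable_on_def intro!: differentiable_at_withinI field_differentiable_imp_differentiable field_differentiable_within_exp)
  then have "exp ` N \<in> null_sets lebesgue" by (simp add: negligible_iff_null_sets)
  then have "AE x in lebesgue. x \<notin> exp ` N" by (rule AE_not_in)
  then show ?thesis by (simp add: AE_completion_iff)
qed

lemma ln_abs_cont:
  fixes X :: "'a \<Rightarrow> real" and f :: "real \<Rightarrow> ennreal"
  assumes P: "prob_space M" and D: "distributed M lborel X f" and f0: "\<And>x. x \<le> 0 \<Longrightarrow> f x = 0"
  shows "absolutely_continuous lborel (distr M borel (\<lambda>\<omega>. ln (X \<omega>)))"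
    and "AE \<omega> in M. X \<omega> > 0"
proof -
  interpret prob_space M by (rule P)
  have Xm: "X \<in> borel_measurable M" using distributed_measurable[OF D] by simp
  have fm: "f \<in> borel_measurable lborel" using distributed_borel_measurable[OF D] .
  have dX: "distr M lborel X = density lborel f" using distributed_distr_eq_density[OF D] .
  have key: "emeasure M (X -` A \<inter> space M) = (\<integral>\<^sup>+ x. f x * indicator A x \<partial>lborel)" if A: "A \<in> sets borel" for A
  proof -
    have "emeasure M (X -` A \<inter> space M) = emeasure (distr M lborel X) A"
      using A Xm by (subst emeasure_distr) auto
    also have "\<dots> = (\<integral>\<^sup>+ x. f x * indicator A x \<partial>lborel)"
      unfolding dX using A fm by (subst emeasure_density) auto
    finally show ?thesis .
  qed
  show "absolutely_continuous lborel (distr M borel (\<lambda>\<omega>. ln (X \<omega>)))"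
    unfolding absolutely_continuous_def
  proof
    fix N :: "real set" assume N: "N \<in> null_sets lborel"
    have Nb: "N \<in> sets borel" using N by auto
    have lnN: "ln -` N \<in> sets borel" using Nb by (intro measurable_sets_borel[OF _ Nb]) auto
    have "emeasure (distr M borel (\<lambda>\<omega>. ln (X \<omega>))) N = emeasure M (X -` (ln -` N) \<inter> space M)"
      using Xm Nb by (subst emeasure_distr) (auto simp: vimage_def)
    also have "\<dots> = (\<integral>\<^sup>+ x. f x * indicator (ln -` N) x \<partial>lborel)" by (rule key[OF lnN])
    also have "\<dots> = (\<integral>\<^sup>+ x. 0 \<partial>(lborel :: real measure))"
    proof (rule nn_integral_cong_AE)
      show "AE x in lborel. f x * indicator (ln -` N) x = 0"
        using exp_image_null[OF N]
      proof eventually_elim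
        fix x assume x: "x \<notin> exp ` N"
        show "f x * indicator (ln -` N) x = 0"
        proof (cases "x \<le> 0")
          case True then show ?thesis by (simp add: f0)
        next
          case False
          then have "ln x \<notin> N" using x by (metis exp_ln image_eqI not_le)
          then show ?thesis by (simp add: indicator_def)
        qed
      qed
    qed
    finally show "N \<in> null_sets (distr M borel (\<lambda>\<omega>. ln (X \<omega>)))"
      using Nb by (auto simp: null_sets_def)
  qed
  have "emeasure M (X -` {..0} \<inter> space M) = (\<integral>\<^sup>+ x. f x * indicator {..0} x \<partial>lborel)"
    by (rule key) simp
  also have "\<dots> = (\<integral>\<^sup>+ x. 0 \<partial>(lborel :: real measure))"
    by (rule nn_integral_cong) (auto simp: indicator_def f0)
  finally have "X -` {..0} \<inter> space M \<in> null_sets M"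
    using Xm by (auto simp: null_sets_def)
  then show "AE \<omega> in M. X \<omega> > 0"
    by (rule AE_I') auto
qed

lemma lin_pos: "0 \<le> (r::real) \<Longrightarrow> r < 1 \<Longrightarrow> 0 \<le> lm \<Longrightarrow> 1 + r * (lm - 1) > 0"
proof -
  assume a: "0 \<le> r" "r < 1" "0 \<le> lm"
  have "1 + r * (lm - 1) = (1 - r) + r * lm" by (simp add: algebra_simps)
  moreover have "r * lm \<ge> 0" using a by simp
  ultimately show ?thesis using a by linarith
qed

lemma fl_pos: "0 \<le> r \<Longrightarrow> r < 1 \<Longrightarrow> 0 \<le> lam l \<Longrightarrow> 0 \<le> lam L \<Longrightarrow> fl lam L l r > 0"
  unfolding fl_def using lin_pos by (simp add: divide_pos_pos)

lemma gvec_pos: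
  assumes r: "0 \<le> r" "r < 1" and lL: "0 \<le> lam L" and ll: "lam L < lam l"
  shows "gvec lam L r l > 0"
proof -
  define a where "a t = 1 + t * (lam l - 1)" for t
  define b where "b t = 1 + t * (lam L - 1)" for t
  have ar: "a r > 0" "b r > 0" unfolding a_def b_def using lin_pos r lL ll by auto
  have D: "((\<lambda>t. ln (fl lam L l t)) has_real_derivative (lam l - lam L) / (a r * b r)) (at r)"
  proof -
    have d1: "((\<lambda>t. a t / b t) has_real_derivative ((lam l - 1) * b r - a r * (lam L - 1)) / (b r * b r)) (at r)"
    proof (rule DERIV_divide)
      show "(a has_real_derivative lam l - 1) (at r)" unfolding a_def by (auto intro!: derivative_eq_intros)
      show "(b has_real_derivative lam L - 1) (at r)" unfolding b_def by (auto intro!: derivative_eq_intros)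
      show "b r \<noteq> 0" using ar by simp
    qed
    have fl_eq: "fl lam L l = (\<lambda>t. a t / b t)" by (simp add: fl_def a_def b_def fun_eq_iff)
    have pos: "a r / b r > 0" using ar by simp
    have "((\<lambda>t. ln (a t / b t)) has_real_derivative (1 / (a r / b r)) * (((lam l - 1) * b r - a r * (lam L - 1)) / (b r * b r))) (at r)"
      by (rule DERIV_chain2[OF DERIV_ln_divide[OF pos] d1])
    moreover have "(1 / (a r / b r)) * (((lam l - 1) * b r - a r * (lam L - 1)) / (b r * b r)) = (lam l - lam L) / (a r * b r)"
    proof -
      have N: "(lam l - 1) * b r - a r * (lam L - 1) = lam l - lam L" by (simp add: a_def b_def algebra_simps)
      have "(1 / (a r / b r)) * (X / (b r * b r)) = X / (a r * b r)" for X
        using ar by (simp add: field_simps)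
      then show ?thesis using N by simp
    qed
    ultimately show ?thesis by (simp add: fl_eq)
  qed
  have "gvec lam L r l = (lam l - lam L) / (a r * b r)"
    unfolding gvec_def by (rule DERIV_imp_deriv[OF D])
  then show ?thesis using ar ll by simp
qed

lemma kernel_section_measurable:
  fixes \<kappa> :: "'x \<Rightarrow> real measure"
  assumes k: "\<kappa> \<in> X \<rightarrow>\<^sub>M subprob_algebra borel" and S: "S \<in> sets (X \<Otimes>\<^sub>M borel)"
  shows "(\<lambda>x. emeasure (\<kappa> x) (Pair x -` S)) \<in> borel_measurable X"
proof -
  have "(\<lambda>x. \<integral>\<^sup>+ y. indicator S (x, y) \<partial>\<kappa> x) \<in> borel_measurable X"
    by (rule nn_integral_measurable_subprob_algebra2[OF _ k]) (use S in simp)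
  moreover have "(\<integral>\<^sup>+ y. indicator S (x, y) \<partial>\<kappa> x) = emeasure (\<kappa> x) (Pair x -` S)" if x: "x \<in> space X" for x
  proof -
    have sk: "sets (\<kappa> x) = sets borel" using subprob_measurableD(2)[OF k x] .
    have "Pair x -` S \<in> sets borel" using sets_Pair1[OF S] .
    then have "(\<integral>\<^sup>+ y. indicator (Pair x -` S) y \<partial>\<kappa> x) = emeasure (\<kappa> x) (Pair x -` S)"
      using sk by (intro nn_integral_indicator) simp
    then show ?thesis by (simp add: indicator_def)
  qed
  ultimately show ?thesis by (rule measurable_cong[THEN iffD1, rotated]) simp
qed

locale disint_setting =
  fixes M :: "'a measure" and H :: "'h measure" and W :: "'a \<Rightarrow> 'h" and T :: "'a \<Rightarrow> real"
    and K :: "'h \<Rightarrow> real measure"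
  assumes P: "prob_space M"
    and Wm: "W \<in> M \<rightarrow>\<^sub>M H" and Tm: "T \<in> borel_measurable M"
    and K: "K \<in> H \<rightarrow>\<^sub>M prob_algebra borel"
    and rect: "\<forall>A\<in>sets H. \<forall>B\<in>sets borel. emeasure M {\<omega>\<in>space M. W \<omega> \<in> A \<and> T \<omega> \<in> B}
          = (\<integral>\<^sup>+\<omega>. indicator A (W \<omega>) * emeasure (K (W \<omega>)) B \<partial>M)"
begin

lemma Ks: "K \<in> H \<rightarrow>\<^sub>M subprob_algebra borel" by (rule measurable_prob_algebraD[OF K])

lemma pK: "h \<in> space H \<Longrightarrow> prob_space (K h)"
  using measurable_space[OF K] by (simp add: space_prob_algebra)

lemma sK: "h \<in> space H \<Longrightarrow> sets (K h) = sets borel"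
  using Ks by (rule subprob_measurableD(2))

lemma disint: "G \<in> sets (H \<Otimes>\<^sub>M borel) \<Longrightarrow>
  emeasure M {\<omega>\<in>space M. (W \<omega>, T \<omega>) \<in> G} = (\<integral>\<^sup>+\<omega>. emeasure (K (W \<omega>)) (Pair (W \<omega>) -` G) \<partial>M)"
  by (rule disint_ext[OF P Wm Tm K rect])

lemma atomless_AE:
  assumes cnt: "\<And>G. G \<in> sets (H \<Otimes>\<^sub>M borel) \<Longrightarrow> (\<And>h. h \<in> space H \<Longrightarrow> countable (Pair h -` G))
      \<Longrightarrow> emeasure M {\<omega>\<in>space M. (W \<omega>, T \<omega>) \<in> G} = 0"
  shows "AE \<omega> in M. \<forall>v. measure (K (W \<omega>)) {v} = 0"
proof -
  define A where "A = {x \<in> space (H \<Otimes>\<^sub>M borel). emeasure (K (fst x)) {snd x} \<noteq> 0}"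
  have kf: "(\<lambda>x. K (fst x)) \<in> H \<Otimes>\<^sub>M borel \<rightarrow>\<^sub>M subprob_algebra borel"
    using Ks by (rule measurable_compose[OF measurable_fst])
  define Dg where "Dg = {y \<in> space ((H \<Otimes>\<^sub>M borel) \<Otimes>\<^sub>M (borel :: real measure)). snd y = snd (fst y)}"
  have diag: "Dg \<in> sets ((H \<Otimes>\<^sub>M borel) \<Otimes>\<^sub>M (borel :: real measure))" unfolding Dg_def by measurable
  have em: "(\<lambda>x. emeasure (K (fst x)) (Pair x -` Dg)) \<in> borel_measurable (H \<Otimes>\<^sub>M borel)"
    by (rule kernel_section_measurable[OF kf diag])
  have "(\<lambda>x. emeasure (K (fst x)) {snd x}) \<in> borel_measurable (H \<Otimes>\<^sub>M borel)"
    using em by (rule measurable_cong[THEN iffD1, rotated]) (auto simp: Dg_def space_pair_measure)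
  then have A: "A \<in> sets (H \<Otimes>\<^sub>M borel)" unfolding A_def by measurable
  have csec: "countable (Pair h -` A)" if h: "h \<in> space H" for h
  proof -
    interpret prob_space "K h" using pK[OF h] .
    have "Pair h -` A \<subseteq> {v. measure (K h) {v} \<noteq> 0}"
      by (auto simp: A_def emeasure_eq_measure)
    then show ?thesis using countable_subset countable_support by blast
  qed
  have z: "emeasure M {\<omega>\<in>space M. (W \<omega>, T \<omega>) \<in> A} = 0" by (rule cnt[OF A csec])
  have im: "(\<lambda>\<omega>. emeasure (K (W \<omega>)) (Pair (W \<omega>) -` A)) \<in> borel_measurable M"
    using kernel_section_measurable[OF Ks A] Wm by (rule measurable_compose[rotated])
  have "AE \<omega> in M. emeasure (K (W \<omega>)) (Pair (W \<omega>) -` A) = 0"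
    using z disint[OF A] nn_integral_0_iff_AE[OF im] by simp
  then show ?thesis
  proof (rule AE_mp, intro AE_I2 impI allI)
    fix \<omega> v assume \<omega>: "\<omega> \<in> space M" and e0: "emeasure (K (W \<omega>)) (Pair (W \<omega>) -` A) = 0"
    have h: "W \<omega> \<in> space H" using measurable_space[OF Wm \<omega>] .
    interpret prob_space "K (W \<omega>)" using pK[OF h] .
    show "measure (K (W \<omega>)) {v} = 0"
    proof (rule ccontr)
      assume ne: "measure (K (W \<omega>)) {v} \<noteq> 0"
      then have "(W \<omega>, v) \<in> A" using h by (auto simp: A_def space_pair_measure emeasure_eq_measure)
      then have "{v} \<subseteq> Pair (W \<omega>) -` A" by auto
      moreover have "Pair (W \<omega>) -` A \<in> sets (K (W \<omega>))" using sets_Pair1[OF A] sK[OF h] by simp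
      ultimately have "emeasure (K (W \<omega>)) {v} \<le> 0" using e0 emeasure_mono by metis
      then show False using ne by (simp add: emeasure_eq_measure)
    qed
  qed
qed

definition "G0 \<alpha> = {x \<in> space (H \<Otimes>\<^sub>M borel). dev_cdf (K (fst x)) \<bar>snd x - cond_mean (K (fst x))\<bar> < 1 - \<alpha>}"

lemma mean_meas: "(\<lambda>h. cond_mean (K h)) \<in> borel_measurable H"
  unfolding cond_mean_def using Ks by (rule measurable_compose[OF _ integral_measurable_subprob_algebra]) simp

lemma devcdf_meas: "(\<lambda>x. dev_cdf (K (fst x)) (snd x)) \<in> borel_measurable (H \<Otimes>\<^sub>M borel)"
proof -
  have kf: "(\<lambda>x. K (fst x)) \<in> H \<Otimes>\<^sub>M borel \<rightarrow>\<^sub>M subprob_algebra borel"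
    using Ks by (rule measurable_compose[OF measurable_fst])
  note mm[measurable] = mean_meas
  define S where "S = {y \<in> space ((H \<Otimes>\<^sub>M borel) \<Otimes>\<^sub>M (borel :: real measure)). \<bar>snd y - cond_mean (K (fst (fst y)))\<bar> \<le> snd (fst y)}"
  have S: "S \<in> sets ((H \<Otimes>\<^sub>M borel) \<Otimes>\<^sub>M (borel :: real measure))" unfolding S_def by measurable
  have "(\<lambda>x. emeasure (K (fst x)) (Pair x -` S)) \<in> borel_measurable (H \<Otimes>\<^sub>M borel)"
    by (rule kernel_section_measurable[OF kf S])
  then have "(\<lambda>x. emeasure (K (fst x)) {v. \<bar>v - cond_mean (K (fst x))\<bar> \<le> snd x}) \<in> borel_measurable (H \<Otimes>\<^sub>M borel)"
    by (rule measurable_cong[THEN iffD1, rotated]) (auto simp: S_def space_pair_measure)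
  then have "(\<lambda>x. enn2real (emeasure (K (fst x)) {v. \<bar>v - cond_mean (K (fst x))\<bar> \<le> snd x})) \<in> borel_measurable (H \<Otimes>\<^sub>M borel)"
    by simp
  then show ?thesis by (simp add: dev_cdf_def measure_def)
qed

lemma G0_sets: "G0 \<alpha> \<in> sets (H \<Otimes>\<^sub>M borel)"
proof -
  note mm[measurable] = mean_meas
  have "(\<lambda>x. dev_cdf (K (fst x)) \<bar>snd x - cond_mean (K (fst x))\<bar>) \<in> borel_measurable (H \<Otimes>\<^sub>M borel)"
    using measurable_compose[OF _ devcdf_meas, of "\<lambda>x. (fst x, \<bar>snd x - cond_mean (K (fst x))\<bar>)" "H \<Otimes>\<^sub>M borel"]
    by simp
  then show ?thesis unfolding G0_def by measurable
qed

lemma main_abstract: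
  assumes atom: "AE \<omega> in M. \<forall>v. measure (K (W \<omega>)) {v} = 0" and a: "0 < \<alpha>" "\<alpha> < 1"
  shows "emeasure M {\<omega>\<in>space M. (W \<omega>, T \<omega>) \<in> G0 \<alpha>} = ennreal (1 - \<alpha>)"
proof -
  interpret prob_space M by (rule P)
  have "emeasure M {\<omega>\<in>space M. (W \<omega>, T \<omega>) \<in> G0 \<alpha>} = (\<integral>\<^sup>+\<omega>. emeasure (K (W \<omega>)) (Pair (W \<omega>) -` G0 \<alpha>) \<partial>M)"
    by (rule disint[OF G0_sets])
  also have "\<dots> = (\<integral>\<^sup>+\<omega>. ennreal (1 - \<alpha>) \<partial>M)"
  proof (rule nn_integral_cong_AE)
    show "AE \<omega> in M. emeasure (K (W \<omega>)) (Pair (W \<omega>) -` G0 \<alpha>) = ennreal (1 - \<alpha>)"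
      using atom
    proof (rule AE_mp, intro AE_I2 impI)
      fix \<omega> assume \<omega>: "\<omega> \<in> space M" and at: "\<forall>v. measure (K (W \<omega>)) {v} = 0"
      have h: "W \<omega> \<in> space H" using measurable_space[OF Wm \<omega>] .
      interpret Kp: prob_space "K (W \<omega>)" using pK[OF h] .
      have "Pair (W \<omega>) -` G0 \<alpha> = {v. dev_cdf (K (W \<omega>)) \<bar>v - cond_mean (K (W \<omega>))\<bar> < 1 - \<alpha>}"
        using h by (auto simp: G0_def space_pair_measure)
      moreover have "measure (K (W \<omega>)) {v. dev_cdf (K (W \<omega>)) \<bar>v - cond_mean (K (W \<omega>))\<bar> < 1 - \<alpha>} = 1 - \<alpha>"
        using a by (intro unif_dev pK[OF h] sK[OF h] at[rule_format]) auto
      ultimately show "emeasure (K (W \<omega>)) (Pair (W \<omega>) -` G0 \<alpha>) = ennreal (1 - \<alpha>)"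
        by (simp add: Kp.emeasure_eq_measure)
    qed
  qed
  also have "\<dots> = ennreal (1 - \<alpha>)" by (simp add: emeasure_space_1)
  finally show ?thesis .
qed

end

lemma ln_Phi:
  assumes "rr l > 0" "rr L > 0"
  shows "ln ((exp (z l) / real (rr l)) / (exp (z L) / real (rr L))) = z l - ln (real (rr l)) - z L + ln (real (rr L))"
  using assms by (simp add: ln_div ln_mult)

lemma null_event:
  fixes M :: "'a measure" and V :: "nat \<Rightarrow> 'a \<Rightarrow> real" and L :: nat and rr :: "nat \<Rightarrow> nat"
    and Mb :: "nat \<Rightarrow> nat \<Rightarrow> real" and g :: "nat \<Rightarrow> real"
  defines "U \<equiv> (\<lambda>\<omega> l. (V l \<omega> / real (rr l)) / (V L \<omega> / real (rr L)))"
  assumes L2: "L \<ge> 2"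
    and rr_pos: "\<forall>l\<in>{1..L}. rr l > 0"
    and P: "prob_space M"
    and indep: "prob_space.indep_vars M (\<lambda>_. borel) V {1..L}"
    and chi2: "\<forall>l\<in>{1..L}. distributed M lborel (V l) (\<lambda>x. ennreal (chi2_density (rr l) x))"
    and orth: "\<forall>i<L-2. (\<Sum>l=1..L-1. Mb i l * g l) = 0"
    and gpos: "\<forall>l\<in>{1..L-1}. g l > 0"
    and WTm: "(\<lambda>\<omega>. (eta L Mb (U \<omega>), tau L (U \<omega>))) \<in> M \<rightarrow>\<^sub>M hspace L \<Otimes>\<^sub>M borel"
    and G: "G \<in> sets (hspace L \<Otimes>\<^sub>M borel)"
    and cnt: "\<And>h. h \<in> space (hspace L) \<Longrightarrow> countable (Pair h -` G)"
  shows "emeasure M {\<omega>\<in>space M. (eta L Mb (U \<omega>), tau L (U \<omega>)) \<in> G} = 0"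
proof -
  interpret prob_space M by (rule P)
  define I where "I = {1..L}"
  have I: "finite I" "1 \<in> I" "L \<in> I" "I \<noteq> {}" using L2 by (auto simp: I_def)
  have sub: "l \<in> {1..L-1} \<Longrightarrow> l \<in> I" for l using L2 by (auto simp: I_def)
  define Phi where "Phi z = (\<lambda>l. (exp (z l) / real (rr l)) / (exp (z L) / real (rr L)))" for z :: "nat \<Rightarrow> real"
  define W' where "W' z = eta L Mb (Phi z)" for z
  define T' where "T' z = tau L (Phi z)" for z
  let ?P = "PiM I (\<lambda>_. lborel :: real measure)"
  define G' where "G' = {z \<in> space ?P. (W' z, T' z) \<in> G}"
  have lnPhi: "l \<in> I \<Longrightarrow> ln (Phi z l) = z l - ln (real (rr l)) - z L + ln (real (rr L))" for z l
    unfolding Phi_def using rr_pos I by (intro ln_Phi) (auto simp: I_def)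
  have W'_eq: "W' z = restrict (\<lambda>i. \<Sum>l=1..L-1. Mb i l * (z l - ln (real (rr l)) - z L + ln (real (rr L)))) {..<L-2}" for z
    unfolding W'_def eta_def using lnPhi sub by (intro restrict_ext sum.cong) auto
  have T'_eq: "T' z = (\<Sum>l=1..L-1. z l - ln (real (rr l)) - z L + ln (real (rr L)))" for z
    unfolding T'_def tau_def using lnPhi sub by (intro sum.cong) auto
  have compm: "l \<in> I \<Longrightarrow> (\<lambda>z. z l) \<in> borel_measurable ?P" for l
    by (rule measurable_component_singleton[THEN measurable_compose[rotated]]) (auto simp: measurable_lborel1)
  have W'm: "W' \<in> ?P \<rightarrow>\<^sub>M hspace L"
    unfolding W'_eq hspace_def
    by (intro measurable_restrict borel_measurable_sum borel_measurable_times borel_measurable_diff borel_measurable_add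
        borel_measurable_const compm sub I)
  have T'm: "T' \<in> borel_measurable ?P"
    unfolding T'_eq
    by (intro borel_measurable_sum borel_measurable_diff borel_measurable_add borel_measurable_const compm sub I)
  have G'm: "G' \<in> sets ?P"
  proof -
    have "(\<lambda>z. (W' z, T' z)) \<in> ?P \<rightarrow>\<^sub>M hspace L \<Otimes>\<^sub>M borel"
      using W'm T'm by (intro measurable_Pair) auto
    from measurable_sets[OF this G] show ?thesis by (simp add: G'_def vimage_def Int_def conj_commute)
  qed
  define d where "d l = (if l < L then g l else 0)" for l
  define s where "s = (\<Sum>l=1..L-1. g l)"
  have spos: "s > 0" unfolding s_def using gpos L2 by (intro sum_pos) auto
  have G'null: "emeasure ?P G' = 0"
  proof (rule null_lines[OF I(1) I(2)])
    have "(1::nat) \<in> {1..L-1}" using L2 by auto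
    then show "d 1 \<noteq> 0" using gpos L2 unfolding d_def
    proof -
      have "0 < g 1" using gpos \<open>(1::nat) \<in> {1..L-1}\<close> by blast
      moreover have "(1::nat) < L" using L2 by simp
      ultimately show "(if 1 < L then g 1 else 0) \<noteq> 0" by simp
    qed
    show "G' \<in> sets ?P" by (rule G'm)
    fix z assume z: "z \<in> space ?P"
    have hz: "W' z \<in> space (hspace L)" by (rule measurable_space[OF W'm z])
    have key: "(\<lambda>i\<in>I. z i + t * d i) \<in> G' \<Longrightarrow> t = (\<lambda>v. (v - T' z) / s) (T' z + t * s) \<and> T' z + t * s \<in> Pair (W' z) -` G" for t
    proof -
      assume a: "(\<lambda>i\<in>I. z i + t * d i) \<in> G'"
      let ?zt = "\<lambda>i\<in>I. z i + t * d i"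
      have c: "l \<in> {1..L-1} \<Longrightarrow> ?zt l - ln (real (rr l)) - ?zt L + ln (real (rr L))
              = (z l - ln (real (rr l)) - z L + ln (real (rr L))) + t * g l" for l
        using sub[of l] I(3) by (auto simp: d_def)
      have "W' ?zt = W' z"
      proof -
        have "(\<Sum>l=1..L-1. Mb i l * (?zt l - ln (real (rr l)) - ?zt L + ln (real (rr L))))
            = (\<Sum>l=1..L-1. Mb i l * (z l - ln (real (rr l)) - z L + ln (real (rr L)))) + t * (\<Sum>l=1..L-1. Mb i l * g l)" for i
        proof -
          have "(\<Sum>l=1..L-1. Mb i l * (?zt l - ln (real (rr l)) - ?zt L + ln (real (rr L))))
              = (\<Sum>l=1..L-1. Mb i l * (z l - ln (real (rr l)) - z L + ln (real (rr L))) + t * (Mb i l * g l))"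
            by (rule sum.cong[OF refl]) (simp only: c, simp add: algebra_simps)
          then show ?thesis by (simp add: sum.distrib sum_distrib_left)
        qed
        then show ?thesis unfolding W'_eq using orth by (intro restrict_ext) auto
      qed
      moreover have "T' ?zt = T' z + t * s"
      proof -
        have "(\<Sum>l=1..L-1. ?zt l - ln (real (rr l)) - ?zt L + ln (real (rr L)))
              = (\<Sum>l=1..L-1. (z l - ln (real (rr l)) - z L + ln (real (rr L))) + t * g l)"
          by (rule sum.cong[OF refl]) (simp only: c)
        then show ?thesis unfolding T'_eq s_def by (simp add: sum.distrib sum_distrib_left)
      qed
      ultimately show ?thesis using a spos by (auto simp: G'_def)
    qed
    have "{t. (\<lambda>i\<in>I. z i + t * d i) \<in> G'} \<subseteq> (\<lambda>v. (v - T' z) / s) ` (Pair (W' z) -` G)"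
      using key by blast
    then show "countable {t. (\<lambda>i\<in>I. z i + t * d i) \<in> G'}"
      using cnt[OF hz] by (rule countable_subset[OF _ countable_image])
  qed
  define mu where "mu i = distr M borel (\<lambda>\<omega>. ln (V i \<omega>))" for i
  have Vm: "i \<in> I \<Longrightarrow> V i \<in> borel_measurable M" for i
  proof -
    assume "i \<in> I"
    then have "distributed M lborel (V i) (\<lambda>x. ennreal (chi2_density (rr i) x))" using chi2 by (auto simp: I_def)
    then have "V i \<in> M \<rightarrow>\<^sub>M lborel" by (rule distributed_measurable)
    then show ?thesis by simp
  qed
  have ac: "i \<in> I \<Longrightarrow> absolutely_continuous lborel (mu i)" for i
    unfolding mu_def using chi2 by (intro ln_abs_cont(1)[OF P, of "V i" "\<lambda>x. ennreal (chi2_density (rr i) x)"]) (auto simp: I_def chi2_density_def)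
  have pos: "i \<in> I \<Longrightarrow> AE \<omega> in M. V i \<omega> > 0" for i
    using chi2 by (intro ln_abs_cont(2)[OF P, of "V i" "\<lambda>x. ennreal (chi2_density (rr i) x)"]) (auto simp: I_def chi2_density_def)
  define f where "f i = (if i \<in> I then RN_deriv lborel (mu i) else (\<lambda>_. 1))" for i
  have dens: "density lborel (f i) = (if i \<in> I then mu i else lborel)" for i
  proof (cases "i \<in> I")
    case True
    then show ?thesis unfolding f_def using ac[OF True]
      by (simp add: sigma_finite_measure.density_RN_deriv[OF lborel.sigma_finite_measure_axioms] mu_def)
  next
    case False then show ?thesis by (simp add: f_def density_1)
  qed
  have fm: "f i \<in> borel_measurable borel" for i
    unfolding f_def by (auto simp: measurable_lborel1[symmetric])
  have sf: "sigma_finite_measure (density lborel (f i))" for i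
  proof (cases "i \<in> I")
    case True
    have "prob_space (mu i)" unfolding mu_def using Vm[OF True] by (intro prob_space_distr) auto
    then show ?thesis unfolding dens using True by (simp add: prob_space_imp_sigma_finite)
  next
    case False then show ?thesis unfolding dens by (simp add: lborel.sigma_finite_measure_axioms)
  qed
  have "G' \<in> null_sets ?P" using G'm G'null by auto
  from PiM_density_null[OF I(1) fm sf this]
  have "emeasure (PiM I (\<lambda>i. density lborel (f i))) G' = 0" .
  moreover have "PiM I (\<lambda>i. density lborel (f i)) = PiM I mu"
    by (rule PiM_cong) (auto simp: dens)
  moreover have "distr M (PiM I (\<lambda>_. borel)) (\<lambda>\<omega>. \<lambda>i\<in>I. ln (V i \<omega>)) = PiM I mu"
  proof -
    have ind: "indep_vars (\<lambda>_. borel) (\<lambda>i \<omega>. ln (V i \<omega>)) I"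
      using indep_vars_compose2[OF indep[unfolded I_def[symmetric]], of "\<lambda>_ x. ln x" "\<lambda>_. borel"] by simp
    show ?thesis unfolding mu_def
      using ind by (subst (asm) indep_vars_iff_distr_eq_PiM') (auto intro: I borel_measurable_ln Vm)
  qed
  ultimately have Znull: "emeasure (distr M (PiM I (\<lambda>_. borel)) (\<lambda>\<omega>. \<lambda>i\<in>I. ln (V i \<omega>))) G' = 0" by simp
  have Zm: "(\<lambda>\<omega>. \<lambda>i\<in>I. ln (V i \<omega>)) \<in> M \<rightarrow>\<^sub>M PiM I (\<lambda>_. borel)"
    using Vm by (intro measurable_restrict) auto
  have G'b: "G' \<in> sets (PiM I (\<lambda>_. borel :: real measure))"
    using G'm by (simp cong: sets_PiM_cong)
  have "emeasure M {\<omega>\<in>space M. (\<lambda>i\<in>I. ln (V i \<omega>)) \<in> G'} = 0"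
    using Znull Zm G'b by (subst (asm) emeasure_distr) (auto simp: vimage_def Int_def conj_commute)
  then have AEZ: "AE \<omega> in M. (\<lambda>i\<in>I. ln (V i \<omega>)) \<notin> G'"
    using Zm G'b by (subst AE_iff_measurable[OF _ refl]) auto
  have AEpos: "AE \<omega> in M. \<forall>i\<in>I. V i \<omega> > 0"
    using I(1) pos by (rule AE_finite_allI)
  have "AE \<omega> in M. (eta L Mb (U \<omega>), tau L (U \<omega>)) \<notin> G"
    using AEZ AEpos
  proof eventually_elim
    case (elim \<omega>)
    define z where "z = (\<lambda>i\<in>I. ln (V i \<omega>))"
    have zs: "z \<in> space ?P" by (auto simp: z_def space_PiM)
    have PU: "l \<in> {1..L-1} \<Longrightarrow> Phi z l = U \<omega> l" for l
      using elim(2) sub[of l] I(3) by (auto simp: Phi_def z_def U_def)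
    have "eta L Mb (U \<omega>) = W' z" unfolding W'_def eta_def using PU by (intro restrict_ext sum.cong) auto
    moreover have "tau L (U \<omega>) = T' z" unfolding T'_def tau_def using PU by (intro sum.cong) auto
    ultimately show ?case using elim(1) zs by (auto simp: G'_def z_def)
  qed
  then show ?thesis
    using WTm G by (subst (asm) AE_iff_measurable[OF _ refl]) (auto intro: measurable_sets_Collect)
qed

lemma dec_chain:
  assumes dec: "\<forall>l\<in>{1..<L}. lam l > lam (Suc l)"
  shows "1 \<le> l \<Longrightarrow> l < L \<Longrightarrow> lam l > (lam L :: real)"
proof (induction "L - l" arbitrary: l)
  case 0 then show ?case by simp
next
  case (Suc k)
  show ?case
  proof (cases "Suc l = L")
    case True then show ?thesis using dec Suc.prems by auto
  next
    case False
    then have "lam (Suc l) > lam L" using Suc by auto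
    moreover have "lam l > lam (Suc l)" using dec Suc.prems by auto
    ultimately show ?thesis by simp
  qed
qed

theorem corollary2:
  fixes M :: "'a measure" and V :: "nat \<Rightarrow> 'a \<Rightarrow> real"
    and L :: nat and lam :: "nat \<Rightarrow> real" and rr :: "nat \<Rightarrow> nat"
    and sa se \<alpha> :: real
    and Mm :: "real \<Rightarrow> nat \<Rightarrow> nat \<Rightarrow> real"
    and K :: "real \<Rightarrow> (nat \<Rightarrow> real) \<Rightarrow> real measure"
  assumes L2: "L \<ge> 2"
    and lam_dec: "\<forall>l\<in>{1..<L}. lam l > lam (Suc l)"
    and lam_nonneg: "lam L \<ge> 0"
    and rr_pos: "\<forall>l\<in>{1..L}. rr l > 0"
    and sa: "sa \<ge> 0" and se: "se > 0"
    and alpha: "0 < \<alpha>" "\<alpha> < 1"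
    and P: "prob_space M"
    and indep: "prob_space.indep_vars M (\<lambda>_. borel) V {1..L}"
    and chi2: "\<forall>l\<in>{1..L}. distributed M lborel (V l) (\<lambda>x. ennreal (chi2_density (rr l) x))"
    and Mbasis: "\<forall>r\<in>{0..<1}. compl_basis L (gvec lam L r) (Mm r)"
    and Kcond: "\<forall>r\<in>{0..<1}. is_cond_dist M L
                   (\<lambda>\<omega> l. (V l \<omega> / real (rr l)) / (V L \<omega> / real (rr L))) (Mm r) (K r)"
  shows "let \<rho> = sa / (sa + se);
             S = (\<lambda>l \<omega>. (lam l * sa + se) * V l \<omega>);
             X = (\<lambda>\<omega> l. (S l \<omega> / real (rr l)) / (S L \<omega> / real (rr L)))
         in prob_space.prob M {\<omega>\<in>space M. \<rho> \<in> plaus_interval lam L Mm K \<alpha> (X \<omega>)} = 1 - \<alpha>"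
proof -
  interpret prob_space M by (rule P)
  define \<rho> where "\<rho> = sa / (sa + se)"
  define S where "S = (\<lambda>l \<omega>. (lam l * sa + se) * V l \<omega>)"
  define X where "X = (\<lambda>\<omega> l. (S l \<omega> / real (rr l)) / (S L \<omega> / real (rr L)))"
  define U where "U = (\<lambda>\<omega> l. (V l \<omega> / real (rr l)) / (V L \<omega> / real (rr L)))"
  define Mb where "Mb = Mm \<rho>"
  define Kr where "Kr = K \<rho>"
  define g where "g = gvec lam L \<rho>"
  define W where "W \<omega> = eta L Mb (U \<omega>)" for \<omega>
  define T where "T \<omega> = tau L (U \<omega>)" for \<omega>
  have sase: "sa + se > 0" using sa se by simp
  have rho: "0 \<le> \<rho>" "\<rho> < 1" unfolding \<rho>_def using sa se by (auto simp: divide_simps)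
  have lamgt: "l \<in> {1..<L} \<Longrightarrow> lam l > lam L" for l using dec_chain[OF lam_dec] by auto
  have lamnn: "l \<in> {1..L} \<Longrightarrow> lam l \<ge> 0" for l
    using lamgt[of l] lam_nonneg by (cases "l = L") auto
  have cpos: "l \<in> {1..L} \<Longrightarrow> lam l * sa + se > 0" for l
    using lamnn[of l] sa se by (simp add: add_nonneg_pos)
  have lin_eq: "1 + \<rho> * (lm - 1) = (lm * sa + se) / (sa + se)" for lm
    unfolding \<rho>_def using sase by (simp add: field_simps)
  have fl_eq: "fl lam L l \<rho> = (lam l * sa + se) / (lam L * sa + se)" if l: "l \<in> {1..L}" for l
  proof -
    have q: "(A / s) / (B / s) = A / B" if "s \<noteq> 0" for A B s :: real
      using that by (cases "B = 0") (simp_all add: field_simps)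
    show ?thesis unfolding fl_def lin_eq using sase by (intro q) simp
  qed
  have rrp: "l \<in> {1..L} \<Longrightarrow> real (rr l) > 0" for l using rr_pos by auto
  have Lin: "L \<in> {1..L}" using L2 by simp
  have sub: "l \<in> {1..L-1} \<Longrightarrow> l \<in> {1..L}" for l by auto
  have XU: "X \<omega> l / fl lam L l \<rho> = U \<omega> l" if l: "l \<in> {1..L}" for \<omega> l
  proof -
    have cl: "lam l * sa + se > 0" and cL: "lam L * sa + se > 0" using cpos[OF l] cpos[OF Lin] by auto
    have rl: "real (rr l) > 0" and rL: "real (rr L) > 0" using rrp[OF l] rrp[OF Lin] by auto
    show ?thesis
    proof (cases "V L \<omega> = 0")
      case True then show ?thesis by (simp add: X_def U_def S_def)
    next
      case False
      have q: "((a * v / p) / (b * w / q)) / (a / b) = (v / p) / (w / q)"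
        if "a \<noteq> 0" "b \<noteq> 0" "p \<noteq> 0" "q \<noteq> 0" "w \<noteq> 0" for a b v w p q :: real
        using that by (simp add: field_simps)
      show ?thesis unfolding X_def U_def S_def fl_eq[OF l] using cl cL rl rL False
        by (intro q) auto
    qed
  qed
  have HX: "Hfun lam L Mb \<rho> (X \<omega>) = W \<omega>" for \<omega>
    unfolding Hfun_def W_def eta_def using XU sub by (intro restrict_ext sum.cong) auto
  have TX: "Tfun L (X \<omega>) - phi lam L \<rho> = T \<omega>" if good: "\<forall>l\<in>{1..L}. V l \<omega> > 0" for \<omega>
  proof -
    have "Tfun L (X \<omega>) - phi lam L \<rho> = (\<Sum>l=1..L-1. ln (X \<omega> l) - ln (fl lam L l \<rho>))"
      unfolding Tfun_def phi_def by (simp add: sum_subtractf)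
    also have "\<dots> = (\<Sum>l=1..L-1. ln (U \<omega> l))"
    proof (rule sum.cong[OF refl])
      fix l assume l: "l \<in> {1..L-1}"
      have l': "l \<in> {1..L}" using sub[OF l] .
      have Xp: "X \<omega> l > 0" unfolding X_def S_def
        using cpos[OF l'] cpos[OF Lin] rrp[OF l'] rrp[OF Lin] good l' Lin by (auto intro!: divide_pos_pos mult_pos_pos)
      have fp: "fl lam L l \<rho> > 0" using fl_eq[OF l'] cpos[OF l'] cpos[OF Lin] by simp
      show "ln (X \<omega> l) - ln (fl lam L l \<rho>) = ln (U \<omega> l)"
        using XU[OF l', of \<omega>] ln_div[of "X \<omega> l" "fl lam L l \<rho>"] Xp fp by simp
    qed
    finally show ?thesis by (simp add: T_def tau_def)
  qed
  have cd: "is_cond_dist M L U Mb Kr" using Kcond rho unfolding U_def Mb_def Kr_def by auto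
  have Kk: "Kr \<in> hspace L \<rightarrow>\<^sub>M prob_algebra borel" using cd by (simp add: is_cond_dist_def)
  have rect: "\<forall>A\<in>sets (hspace L). \<forall>B\<in>sets borel. emeasure M {\<omega>\<in>space M. W \<omega> \<in> A \<and> T \<omega> \<in> B}
          = (\<integral>\<^sup>+\<omega>. indicator A (W \<omega>) * emeasure (Kr (W \<omega>)) B \<partial>M)"
    using cd by (simp add: is_cond_dist_def W_def T_def)
  have Vm: "l \<in> {1..L} \<Longrightarrow> V l \<in> borel_measurable M" for l
  proof -
    assume "l \<in> {1..L}"
    then have "distributed M lborel (V l) (\<lambda>x. ennreal (chi2_density (rr l) x))" using chi2 by auto
    then have "V l \<in> M \<rightarrow>\<^sub>M lborel" by (rule distributed_measurable)
    then show ?thesis by simp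
  qed
  have Ulm: "l \<in> {1..L-1} \<Longrightarrow> (\<lambda>\<omega>. ln (U \<omega> l)) \<in> borel_measurable M" for l
    unfolding U_def using Vm[OF sub] Vm[OF Lin] by measurable
  have Wm: "W \<in> M \<rightarrow>\<^sub>M hspace L"
    unfolding W_def eta_def hspace_def
    by (intro measurable_restrict borel_measurable_sum borel_measurable_times borel_measurable_const Ulm)
  have Tm: "T \<in> borel_measurable M"
    unfolding T_def tau_def by (intro borel_measurable_sum Ulm)
  interpret D: disint_setting M "hspace L" W T Kr
    by unfold_locales (fact P Wm Tm Kk rect)+
  have orth: "\<forall>i<L-2. (\<Sum>l=1..L-1. Mb i l * g l) = 0"
    using Mbasis rho unfolding Mb_def g_def compl_basis_def by auto
  have gpos: "\<forall>l\<in>{1..L-1}. g l > 0"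
  proof
    fix l assume l: "l \<in> {1..L-1}"
    then have "l \<in> {1..<L}" by auto
    then show "g l > 0" unfolding g_def using gvec_pos[of \<rho> lam L l] rho lam_nonneg lamgt[of l] by blast
  qed
  have WTm: "(\<lambda>\<omega>. (eta L Mb (U \<omega>), tau L (U \<omega>))) \<in> M \<rightarrow>\<^sub>M hspace L \<Otimes>\<^sub>M borel"
    using Wm Tm unfolding W_def T_def by (intro measurable_Pair) auto
  have atom: "AE \<omega> in M. \<forall>v. measure (Kr (W \<omega>)) {v} = 0"
  proof (rule D.atomless_AE)
    fix G :: "((nat \<Rightarrow> real) \<times> real) set" assume G: "G \<in> sets (hspace L \<Otimes>\<^sub>M borel)" and c: "\<And>h. h \<in> space (hspace L) \<Longrightarrow> countable (Pair h -` G)"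
    show "emeasure M {\<omega>\<in>space M. (W \<omega>, T \<omega>) \<in> G} = 0"
      unfolding W_def T_def U_def
      by (rule null_event[OF L2 rr_pos P indep chi2 orth gpos WTm[unfolded U_def] G c])
  qed
  have main: "emeasure M {\<omega>\<in>space M. (W \<omega>, T \<omega>) \<in> D.G0 \<alpha>} = ennreal (1 - \<alpha>)"
    by (rule D.main_abstract[OF atom alpha])
  define E where "E = {\<omega>\<in>space M. \<rho> \<in> plaus_interval lam L Mm K \<alpha> (X \<omega>)}"
  have E_eq: "E = {\<omega>\<in>space M. dev_cdf (Kr (W \<omega>)) \<bar>Tfun L (X \<omega>) - phi lam L \<rho> - cond_mean (Kr (W \<omega>))\<bar> < 1 - \<alpha>}"
    unfolding E_def plaus_interval_def plaus_def using rho HX by (auto simp: Mb_def Kr_def)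
  have Xlm: "l \<in> {1..L-1} \<Longrightarrow> (\<lambda>\<omega>. ln (X \<omega> l)) \<in> borel_measurable M" for l
    unfolding X_def S_def using Vm[OF sub] Vm[OF Lin] by measurable
  have TXm: "(\<lambda>\<omega>. Tfun L (X \<omega>)) \<in> borel_measurable M"
    unfolding Tfun_def by (intro borel_measurable_sum Xlm)
  have Em: "E \<in> sets M"
  proof -
    note [measurable] = D.mean_meas Wm TXm
    have f1: "(\<lambda>\<omega>. (W \<omega>, \<bar>Tfun L (X \<omega>) - phi lam L \<rho> - cond_mean (Kr (W \<omega>))\<bar>)) \<in> M \<rightarrow>\<^sub>M hspace L \<Otimes>\<^sub>M borel"
      by measurable
    have "(\<lambda>\<omega>. dev_cdf (Kr (W \<omega>)) \<bar>Tfun L (X \<omega>) - phi lam L \<rho> - cond_mean (Kr (W \<omega>))\<bar>) \<in> borel_measurable M"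
      using measurable_compose[OF f1 D.devcdf_meas] by simp
    then show ?thesis unfolding E_eq by measurable
  qed
  have G0m: "{\<omega>\<in>space M. (W \<omega>, T \<omega>) \<in> D.G0 \<alpha>} \<in> sets M"
    using measurable_sets[OF WTm D.G0_sets[of \<alpha>]] unfolding W_def T_def
    by (simp add: vimage_def Int_def conj_commute)
  have AEgood: "AE \<omega> in M. \<forall>l\<in>{1..L}. V l \<omega> > 0"
  proof (rule AE_finite_allI)
    fix l assume l: "l \<in> {1..L}"
    show "AE \<omega> in M. V l \<omega> > 0"
      using chi2 l by (intro ln_abs_cont(2)[OF P, of "V l" "\<lambda>x. ennreal (chi2_density (rr l) x)"]) (auto simp: chi2_density_def)
  qed simp
  have "AE \<omega> in M. \<omega> \<in> E \<longleftrightarrow> \<omega> \<in> {\<omega>\<in>space M. (W \<omega>, T \<omega>) \<in> D.G0 \<alpha>}"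
    using AEgood
  proof (rule AE_mp, intro AE_I2 impI)
    fix \<omega> assume \<omega>: "\<omega> \<in> space M" and good: "\<forall>l\<in>{1..L}. V l \<omega> > 0"
    have h: "W \<omega> \<in> space (hspace L)" using measurable_space[OF Wm \<omega>] .
    show "\<omega> \<in> E \<longleftrightarrow> \<omega> \<in> {\<omega>\<in>space M. (W \<omega>, T \<omega>) \<in> D.G0 \<alpha>}"
      unfolding E_eq D.G0_def using \<omega> h TX[OF good] by (auto simp: space_pair_measure)
  qed
  then have "prob E = prob {\<omega>\<in>space M. (W \<omega>, T \<omega>) \<in> D.G0 \<alpha>}"
    by (rule measure_eq_AE[OF _ Em G0m])
  also have "\<dots> = 1 - \<alpha>" using main alpha by (simp add: emeasure_eq_measure)
  finally have "prob E = 1 - \<alpha>" .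
  then show ?thesis by (simp add: E_def \<rho>_def X_def S_def Let_def)
qed

end
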